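(* Let $T$ be a metrizable Choquet simplex such that (1) $\partial_e(T)=Y\cup Z$ with $Y\cap Z=\emptyset$, (2) $Y$ and $Z$ are Borel subsets, and (3) $M_Y=\overline{\mathrm{conv}(Y)}$ and $M_Z=\overline{\mathrm{conv}(Z)}$. Then there is a continuous real affine function $f$ on $T$ with $0\le f\le1$, $f|_{M_Y}=1$ and $f|_{M_Z}=0$.
   Context: For a metrizable Choquet simplex $T$ with extremal boundary $X=\partial_e(T)$, each $t\in T$ is the barycenter of a unique Borel probability measure $\mu_t$ on $X$ (i.e. $f(t)=\int_Xf\,d\mu_t$ for all continuous affine $f$ on $T$). For a Borel subset $F\subset X$, $M_F=\{t\in T:\mu_t(X\setminus F)=0\}$, the set of points whose representing measure is concentrated on $F$. *)

theory Defs
  imports "HOL-Probability.Probability"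
begin

definition affine_fun_on :: "'a::real_vector set \<Rightarrow> ('a \<Rightarrow> real) \<Rightarrow> bool" where
  "affine_fun_on T f \<longleftrightarrow>
     (\<forall>x\<in>T. \<forall>y\<in>T. \<forall>u::real. 0 \<le> u \<and> u \<le> 1 \<longrightarrow>
        f (u *\<^sub>R x + (1 - u) *\<^sub>R y) = u * f x + (1 - u) * f y)"

definition ext_bdry :: "'a::real_vector set \<Rightarrow> 'a set" where
  "ext_bdry T = {x. x extreme_point_of T}"

definition rep_measure :: "'a::real_normed_vector set \<Rightarrow> 'a \<Rightarrow> 'a measure \<Rightarrow> bool" where
  "rep_measure T t \<mu> \<longleftrightarrow>
     sets \<mu> = sets (restrict_space borel T) \<and> space \<mu> = T \<and> prob_space \<mu> \<and>
     ext_bdry T \<in> sets \<mu> \<and> emeasure \<mu> (T - ext_bdry T) = 0 \<and>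
     (\<forall>f. continuous_on T f \<and> affine_fun_on T f \<longrightarrow> f t = (\<integral>x. f x \<partial>\<mu>))"

text \<open>Metrizable Choquet simplex: a compact convex subset of a normed space such that
  every point is the barycenter of a unique Borel probability measure on the extremal boundary.\<close>
definition metrizable_choquet_simplex :: "'a::real_normed_vector set \<Rightarrow> bool" where
  "metrizable_choquet_simplex T \<longleftrightarrow> compact T \<and> convex T \<and>
     (\<forall>t\<in>T. \<exists>!\<mu>. rep_measure T t \<mu>)"

definition rep_meas :: "'a::real_normed_vector set \<Rightarrow> 'a \<Rightarrow> 'a measure" where
  "rep_meas T t = (THE \<mu>. rep_measure T t \<mu>)"

definition M_set :: "'a::real_normed_vector set \<Rightarrow> 'a set \<Rightarrow> 'a set" where
  "M_set T F = {t\<in>T. emeasure (rep_meas T t) (ext_bdry T - F) = 0}"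

end

theory Submission
  imports Defs
begin

definition AF :: "'a::real_normed_vector set \<Rightarrow> ('a \<Rightarrow> real) set" where
  "AF T = {g. continuous_on T g \<and> affine_fun_on T g}"

lemma AF_sum:
  assumes "finite G" "G \<subseteq> AF T"
  shows "(\<lambda>x. \<Sum>g\<in>G. c g * g x) \<in> AF T"
proof -
  have "continuous_on T (\<lambda>x. \<Sum>g\<in>G. c g * g x)"
    using assms by (intro continuous_intros) (auto simp: AF_def)
  moreover have "affine_fun_on T (\<lambda>x. \<Sum>g\<in>G. c g * g x)"
    unfolding affine_fun_on_def
  proof (intro ballI allI impI)
    fix x y u assume xy: "x \<in> T" "y \<in> T" and u: "0 \<le> u \<and> u \<le> (1::real)"
    have "(\<Sum>g\<in>G. c g * g (u *\<^sub>R x + (1 - u) *\<^sub>R y)) = (\<Sum>g\<in>G. u * (c g * g x) + (1 - u) * (c g * g y))"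
    proof (intro sum.cong refl)
      fix g assume "g \<in> G"
      then have "g (u *\<^sub>R x + (1 - u) *\<^sub>R y) = u * g x + (1 - u) * g y"
        using assms xy u by (auto simp: AF_def affine_fun_on_def)
      then have "c g * g (u *\<^sub>R x + (1 - u) *\<^sub>R y) = c g * (u * g x + (1 - u) * g y)"
        by (rule arg_cong)
      then show "c g * g (u *\<^sub>R x + (1 - u) *\<^sub>R y) = u * (c g * g x) + (1 - u) * (c g * g y)"
        by (simp only: ring_distribs mult_ac)
    qed
    also have "\<dots> = u * (\<Sum>g\<in>G. c g * g x) + (1 - u) * (\<Sum>g\<in>G. c g * g y)"
      by (simp add: sum.distrib sum_distrib_left)
    finally show "(\<Sum>g\<in>G. c g * g (u *\<^sub>R x + (1 - u) *\<^sub>R y)) = u * (\<Sum>g\<in>G. c g * g x) + (1 - u) * (\<Sum>g\<in>G. c g * g y)" .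
  qed
  ultimately show ?thesis by (simp add: AF_def)
qed

lemma rep_meas_rep:
  assumes "metrizable_choquet_simplex T" "t \<in> T"
  shows "rep_measure T t (rep_meas T t)"
  using assms unfolding metrizable_choquet_simplex_def rep_meas_def by (metis theI')

lemma rep_meas_eq:
  assumes "metrizable_choquet_simplex T" "t \<in> T" "rep_measure T t \<mu>"
  shows "rep_meas T t = \<mu>"
  using assms unfolding metrizable_choquet_simplex_def rep_meas_def by (metis the1_equality)

lemma rep_measurable:
  assumes "rep_measure T t \<mu>" "q \<in> borel_measurable (restrict_space borel T)"
  shows "q \<in> borel_measurable \<mu>"
  using assms unfolding rep_measure_def by (metis measurable_cong_sets)

lemma rep_integrable:
  fixes h :: "'a::real_normed_vector \<Rightarrow> real"
  assumes "rep_measure T t \<mu>" "compact T" "continuous_on T h"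
  shows "integrable \<mu> h"
proof -
  interpret prob_space \<mu> using assms(1) by (simp add: rep_measure_def)
  have meas: "h \<in> borel_measurable \<mu>"
    by (rule rep_measurable[OF assms(1) borel_measurable_continuous_on_restrict[OF assms(3)]])
  have "compact (h ` T)" using assms by (intro compact_continuous_image)
  then have "bounded (h ` T)" by (rule compact_imp_bounded)
  then obtain B where "\<forall>y\<in>h ` T. norm y \<le> B" unfolding bounded_iff by blast
  then have B: "\<And>x. x \<in> T \<Longrightarrow> norm (h x) \<le> B" by simp
  have sp: "space \<mu> = T" using assms(1) by (simp add: rep_measure_def)
  have "AE x in \<mu>. norm (h x) \<le> B" by (intro AE_I2) (use B sp in auto)
  then show ?thesis by (rule integrable_const_bound[OF _ meas])
qed

lemma rep_AE_ext:
  assumes "rep_measure T t \<mu>"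
  shows "AE x in \<mu>. x \<in> ext_bdry T"
proof (rule AE_I')
  show "T - ext_bdry T \<in> null_sets \<mu>"
    using assms unfolding rep_measure_def by (auto simp: null_sets_def)
  show "{x \<in> space \<mu>. x \<notin> ext_bdry T} \<subseteq> T - ext_bdry T"
    using assms unfolding rep_measure_def by auto
qed

lemma rep_le:
  assumes "rep_measure T t \<mu>" "compact T" "h \<in> AF T" "\<And>x. x \<in> ext_bdry T \<Longrightarrow> h x \<le> c"
  shows "h t \<le> c"
proof -
  interpret prob_space \<mu> using assms(1) by (simp add: rep_measure_def)
  have "h t = (\<integral>x. h x \<partial>\<mu>)"
    using assms(1,3) by (auto simp: rep_measure_def AF_def)
  also have "\<dots> \<le> (\<integral>x. c \<partial>\<mu>)"
    using assms rep_AE_ext[OF assms(1)]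
    by (intro integral_mono_AE rep_integrable[OF assms(1,2)]) (auto simp: AF_def elim: AE_mp)
  also have "\<dots> = c" by (simp add: prob_space)
  finally show ?thesis .
qed

lemma convex_join:
  assumes P: "convex P" and Q: "convex Q"
  shows "convex {a *\<^sub>R y + (1 - a) *\<^sub>R z | a y z. a \<in> {0..1::real} \<and> y \<in> P \<and> z \<in> Q}"
    (is "convex ?S")
proof (rule convexI)
  fix p1 p2 and u v :: real
  assume p1: "p1 \<in> ?S" and p2: "p2 \<in> ?S" and u: "0 \<le> u" and v: "0 \<le> v" and uv: "u + v = 1"
  from p1 obtain a1 y1 z1 where 1: "p1 = a1 *\<^sub>R y1 + (1 - a1) *\<^sub>R z1" "a1 \<in> {0..1}" "y1 \<in> P" "z1 \<in> Q"
    by blast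
  from p2 obtain a2 y2 z2 where 2: "p2 = a2 *\<^sub>R y2 + (1 - a2) *\<^sub>R z2" "a2 \<in> {0..1}" "y2 \<in> P" "z2 \<in> Q"
    by blast
  define A where "A = u * a1 + v * a2"
  have A01: "0 \<le> A" "A \<le> 1" using 1 2 u v uv unfolding A_def
    by (auto intro!: add_nonneg_nonneg mult_nonneg_nonneg)
      (metis (no_types) add_mono atLeastAtMost_iff mult_left_le mult_nonneg_nonneg)
  have eq: "u *\<^sub>R p1 + v *\<^sub>R p2 = ((u * a1) *\<^sub>R y1 + (v * a2) *\<^sub>R y2) + ((u * (1 - a1)) *\<^sub>R z1 + (v * (1 - a2)) *\<^sub>R z2)"
    unfolding 1 2 by (simp add: scaleR_add_right algebra_simps)
  have ua: "0 \<le> u * a1" "0 \<le> v * a2" "0 \<le> u * (1 - a1)" "0 \<le> v * (1 - a2)"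
    using 1 2 u v by auto
  show "u *\<^sub>R p1 + v *\<^sub>R p2 \<in> ?S"
  proof (cases "A = 0")
    case True
    then have "u * a1 = 0" "v * a2 = 0" using ua unfolding A_def by linarith+
    moreover have "(u * (1 - a1)) *\<^sub>R z1 + (v * (1 - a2)) *\<^sub>R z2 \<in> Q"
      using ua True uv unfolding A_def by (intro convexD[OF Q 1(4) 2(4)]) (auto simp: algebra_simps)
    ultimately show ?thesis using eq 1(3)
      by (intro CollectI exI[of _ 0] exI[of _ y1]
          exI[of _ "(u * (1 - a1)) *\<^sub>R z1 + (v * (1 - a2)) *\<^sub>R z2"]) auto
  next
    case False
    show ?thesis
    proof (cases "A = 1")
      case True
      have "u * (1 - a1) + v * (1 - a2) = 0" using True uv unfolding A_def by (simp add: algebra_simps)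
      then have "u * (1 - a1) = 0" "v * (1 - a2) = 0" using ua by linarith+
      moreover have "(u * a1) *\<^sub>R y1 + (v * a2) *\<^sub>R y2 \<in> P"
        using ua True uv unfolding A_def by (intro convexD[OF P 1(3) 2(3)]) (auto simp: algebra_simps)
      ultimately show ?thesis using eq 1(4)
        by (intro CollectI exI[of _ 1] exI[of _ "(u * a1) *\<^sub>R y1 + (v * a2) *\<^sub>R y2"]
            exI[of _ z1]) auto
    next
      case False2: False
      have Apos: "0 < A" "A < 1" using A01 False False2 by auto
      define y where "y = (u * a1 / A) *\<^sub>R y1 + (v * a2 / A) *\<^sub>R y2"
      define z where "z = (u * (1 - a1) / (1 - A)) *\<^sub>R z1 + (v * (1 - a2) / (1 - A)) *\<^sub>R z2"
      have yP: "y \<in> P" unfolding y_def using ua Apos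
        by (intro convexD[OF P 1(3) 2(3)]) (auto simp: A_def add_divide_distrib[symmetric])
      have "u * (1 - a1) / (1 - A) + v * (1 - a2) / (1 - A) = 1"
        using Apos uv by (simp add: add_divide_distrib[symmetric] A_def algebra_simps)
      then have zQ: "z \<in> Q" unfolding z_def using ua Apos
        by (intro convexD[OF Q 1(4) 2(4)]) auto
      have "A *\<^sub>R y = (u * a1) *\<^sub>R y1 + (v * a2) *\<^sub>R y2"
        using Apos by (simp add: y_def scaleR_add_right)
      moreover have "(1 - A) *\<^sub>R z = (u * (1 - a1)) *\<^sub>R z1 + (v * (1 - a2)) *\<^sub>R z2"
        using Apos by (simp add: z_def scaleR_add_right)
      ultimately have "u *\<^sub>R p1 + v *\<^sub>R p2 = A *\<^sub>R y + (1 - A) *\<^sub>R z" using eq by simp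
      then show ?thesis using yP zQ A01
        by (intro CollectI exI[of _ A] exI[of _ y] exI[of _ z]) auto
    qed
  qed
qed

lemma approx:
  assumes S: "metrizable_choquet_simplex T" and KT: "K \<subseteq> T" and cK: "compact K"
    and cvK: "convex K" and ne: "K \<noteq> {}" and ext: "ext_bdry T \<subseteq> K" and t: "t \<in> T"
  shows "\<exists>k\<in>K. \<forall>g\<in>AF T. g k = g t"
proof -
  have cT: "compact T" using S by (simp add: metrizable_choquet_simplex_def)
  have fin: "\<exists>k\<in>K. \<forall>g\<in>G. g k = g t" if G: "finite G" "G \<subseteq> AF T" for G
  proof -
    define \<phi> where "\<phi> = (\<lambda>k. \<Sum>g\<in>G. (g k - g t)^2)"
    have gc: "\<And>g. g \<in> G \<Longrightarrow> continuous_on K g"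
      using G KT by (auto simp: AF_def intro: continuous_on_subset)
    have c\<phi>: "continuous_on K \<phi>" unfolding \<phi>_def using gc by (intro continuous_intros) auto
    obtain k0 where k0: "k0 \<in> K" "\<And>k. k \<in> K \<Longrightarrow> \<phi> k0 \<le> \<phi> k"
      using continuous_attains_inf[OF cK ne c\<phi>] by blast
    have "\<phi> k0 = 0"
    proof (rule ccontr)
      assume nz: "\<phi> k0 \<noteq> 0"
      have "\<phi> k0 \<ge> 0" unfolding \<phi>_def by (intro sum_nonneg) auto
      hence pos: "\<phi> k0 > 0" using nz by linarith
      define c where "c g = g t - g k0" for g :: "'a \<Rightarrow> real"
      define h where "h = (\<lambda>x. \<Sum>g\<in>G. c g * g x)"
      have hAF: "h \<in> AF T" unfolding h_def by (rule AF_sum[OF G])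
      have gaff: "\<And>g a b s. g \<in> G \<Longrightarrow> a \<in> T \<Longrightarrow> b \<in> T \<Longrightarrow> 0 \<le> s \<Longrightarrow> s \<le> 1 \<Longrightarrow>
          g (s *\<^sub>R a + (1 - s) *\<^sub>R b) = s * g a + (1 - s) * g b"
        using G by (auto simp: AF_def affine_fun_on_def)
      have \<phi>k0: "\<phi> k0 = (\<Sum>g\<in>G. (c g)^2)"
        unfolding \<phi>_def c_def by (intro sum.cong refl) (simp add: power2_commute)
      have \<phi>k0': "\<phi> k0 = (\<Sum>g\<in>G. c g * (g t - g k0))"
        unfolding \<phi>k0 by (intro sum.cong refl) (simp add: power2_eq_square c_def)
      have key: "h k \<le> h k0" if k: "k \<in> K" for k
      proof -
        define d where "d g = g k - g k0" for g :: "'a \<Rightarrow> real"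
        define p where "p = (\<Sum>g\<in>G. c g * d g)"
        define D where "D = (\<Sum>g\<in>G. (d g)^2)"
        have D0: "D \<ge> 0" unfolding D_def by (intro sum_nonneg) auto
        have ineq: "s * D \<ge> 2 * p" if s: "0 < s" "s \<le> 1" for s
        proof -
          let ?ks = "s *\<^sub>R k + (1 - s) *\<^sub>R k0"
          have "?ks \<in> K" using s by (intro convexD[OF cvK k k0(1)]) auto
          hence "\<phi> k0 \<le> \<phi> ?ks" by (rule k0(2))
          also have "\<phi> ?ks = (\<Sum>g\<in>G. (s * d g - c g)^2)"
            unfolding \<phi>_def
          proof (intro sum.cong refl)
            fix g assume "g \<in> G"
            then have "g ?ks = s * g k + (1 - s) * g k0" by (rule gaff) (use k k0 KT s in auto)
            then have "g ?ks - g t = s * d g - c g" by (simp add: d_def c_def algebra_simps)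
            then show "(g ?ks - g t)^2 = (s * d g - c g)^2" by simp
          qed
          also have "\<dots> = (\<Sum>g\<in>G. s^2 * (d g)^2 - 2 * s * (c g * d g) + (c g)^2)"
            by (intro sum.cong refl) (simp add: power2_eq_square algebra_simps)
          also have "\<dots> = s^2 * D - 2 * s * p + (\<Sum>g\<in>G. (c g)^2)"
            by (simp add: sum.distrib sum_subtractf sum_distrib_left D_def p_def)
          finally have "0 \<le> s^2 * D - 2 * s * p" using \<phi>k0 by simp
          hence "0 \<le> s * (s * D - 2 * p)" by (simp add: power2_eq_square algebra_simps)
          thus ?thesis using s by (simp add: zero_le_mult_iff)
        qed
        have "p \<le> 0"
        proof (rule ccontr)
          assume "\<not> p \<le> 0" hence pp: "p > 0" by simp
          define s where "s = min 1 (p / (D + 1))"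
          have s0: "0 < s" "s \<le> 1" using pp D0 by (auto simp: s_def)
          have "s * D \<le> p / (D + 1) * D" using D0 by (intro mult_right_mono) (auto simp: s_def)
          also have "\<dots> < p" using pp D0 by (simp add: field_simps)
          also have "p < 2 * p" using pp by simp
          finally show False using ineq[OF s0] by simp
        qed
        moreover have "h k - h k0 = p"
          unfolding h_def p_def d_def by (simp add: right_diff_distrib sum_subtractf)
        ultimately show ?thesis by simp
      qed
      have "h t - h k0 = \<phi> k0"
        unfolding \<phi>k0' h_def by (simp add: right_diff_distrib sum_subtractf)
      hence "h k0 < h t" using pos by simp
      moreover have "h t \<le> h k0"
        by (rule rep_le[OF rep_meas_rep[OF S t] cT hAF]) (use key ext in auto)
      ultimately show False by simp
    qed
    then have "\<forall>g\<in>G. (g k0 - g t)^2 = 0"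
      unfolding \<phi>_def using G(1) by (subst (asm) sum_nonneg_eq_0_iff) auto
    then have "\<forall>g\<in>G. g k0 = g t" by simp
    with k0 show ?thesis by blast
  qed
  have "K \<inter> \<Inter>((\<lambda>g. {k\<in>K. g k = g t}) ` AF T) \<noteq> {}"
  proof (rule compact_imp_fip[OF cK])
    fix U assume "U \<in> (\<lambda>g. {k\<in>K. g k = g t}) ` AF T"
    then obtain g where g: "g \<in> AF T" "U = {k\<in>K. g k = g t}" by auto
    have "continuous_on K g" using g KT by (auto simp: AF_def intro: continuous_on_subset)
    then show "closed U"
      using continuous_closed_preimage_constant[of K g "g t"] compact_imp_closed[OF cK] g by auto
  next
    fix F' assume "finite F'" "F' \<subseteq> (\<lambda>g. {k\<in>K. g k = g t}) ` AF T"
    then obtain G where G: "G \<subseteq> AF T" "finite G" "F' = (\<lambda>g. {k\<in>K. g k = g t}) ` G"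
      by (meson finite_subset_image)
    from fin[OF G(2,1)] obtain k where "k \<in> K" "\<forall>g\<in>G. g k = g t" by blast
    then show "K \<inter> \<Inter>F' \<noteq> {}" using G(3) by auto
  qed
  then show ?thesis by auto
qed

lemma cont_bound:
  fixes h :: "'a::topological_space \<Rightarrow> real"
  assumes "compact T" "continuous_on T h"
  shows "\<exists>B. \<forall>z\<in>T. \<bar>h z\<bar> \<le> B"
proof -
  have "compact (h ` T)" using assms by (intro compact_continuous_image)
  then have "bounded (h ` T)" by (rule compact_imp_bounded)
  then obtain B where "\<forall>y\<in>h ` T. norm y \<le> B" unfolding bounded_iff by blast
  then have "\<And>z. z \<in> T \<Longrightarrow> norm (h z) \<le> B" by simp
  then show ?thesis by auto
qed

lemma mix:
  assumes S: "metrizable_choquet_simplex T" and x: "x \<in> T" and y: "y \<in> T"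
    and u0: "0 \<le> u" and u1: "u \<le> 1"
    and q: "q \<in> borel_measurable (restrict_space borel T)" and qB: "\<And>z. z \<in> T \<Longrightarrow> \<bar>q z\<bar> \<le> B"
  shows "(\<integral>z. q z \<partial>rep_meas T (u *\<^sub>R x + (1 - u) *\<^sub>R y)) =
           u * (\<integral>z. q z \<partial>rep_meas T x) + (1 - u) * (\<integral>z. q z \<partial>rep_meas T y)"
proof -
  define K where "K = restrict_space borel T"
  define N where "N = (\<lambda>b. if b then rep_meas T x else rep_meas T y)"
  define \<nu> where "\<nu> = Giry_Monad.bind (measure_pmf (bernoulli_pmf u)) N"
  have rx: "rep_measure T x (rep_meas T x)" by (rule rep_meas_rep[OF S x])
  have ry: "rep_measure T y (rep_meas T y)" by (rule rep_meas_rep[OF S y])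
  have cT: "compact T" and cvT: "convex T" using S by (auto simp: metrizable_choquet_simplex_def)
  have Nsets: "\<And>b. sets (N b) = sets K" and Nprob: "\<And>b. prob_space (N b)"
    and Nspace: "\<And>b. space (N b) = T" and Nnull: "\<And>b. emeasure (N b) (T - ext_bdry T) = 0"
    and Next: "\<And>b. ext_bdry T \<in> sets (N b)"
    using rx ry by (auto simp: N_def K_def rep_measure_def)
  have Nmeas: "N \<in> measurable (measure_pmf (bernoulli_pmf u)) (subprob_algebra K)"
    using Nsets Nprob by (auto simp: space_subprob_algebra prob_space_imp_subprob_space)
  have Nmeas': "N \<in> measurable (measure_pmf (bernoulli_pmf u)) (prob_algebra K)"
    using Nsets Nprob by (auto simp: space_prob_algebra)
  have finM: "finite_measure (measure_pmf (bernoulli_pmf u))"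
    by (metis prob_space_def prob_space_measure_pmf)
  have spK: "space K = T" by (simp add: K_def space_restrict_space)
  have intq: "(\<integral>z. q' z \<partial>\<nu>) = u * (\<integral>z. q' z \<partial>rep_meas T x) + (1 - u) * (\<integral>z. q' z \<partial>rep_meas T y)"
    if q': "q' \<in> borel_measurable K" and qB': "\<And>z. z \<in> T \<Longrightarrow> \<bar>q' z\<bar> \<le> B'" for q' B'
  proof -
    have "(\<integral>z. q' z \<partial>\<nu>) = (\<integral>b. (\<integral>z. q' z \<partial>N b) \<partial>measure_pmf (bernoulli_pmf u))"
      unfolding \<nu>_def
    proof (rule integral_bind[OF q' _ Nmeas finM])
      show "\<And>z. z \<in> space K \<Longrightarrow> \<bar>q' z\<bar> \<le> B'" using qB' spK by auto
      show "AE b in measure_pmf (bernoulli_pmf u). emeasure (N b) (space (N b)) \<le> ennreal 1"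
        using Nprob by (simp add: prob_space.emeasure_space_1)
    qed
    also have "\<dots> = u * (\<integral>z. q' z \<partial>rep_meas T x) + (1 - u) * (\<integral>z. q' z \<partial>rep_meas T y)"
      using u0 u1 by (simp add: N_def algebra_simps)
    finally show ?thesis .
  qed
  have sp: "space (measure_pmf (bernoulli_pmf u)) \<noteq> {}" by simp
  have sets\<nu>: "sets \<nu> = sets K" unfolding \<nu>_def by (rule sets_bind) (use Nsets sp in auto)
  have rep: "rep_measure T (u *\<^sub>R x + (1 - u) *\<^sub>R y) \<nu>"
    unfolding rep_measure_def
  proof (intro conjI allI impI)
    show "sets \<nu> = sets (restrict_space borel T)" using sets\<nu> by (simp add: K_def)
    show "space \<nu> = T" using sets\<nu> spK by (metis sets_eq_imp_space_eq)
    show "prob_space \<nu>" unfolding \<nu>_def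
      by (rule prob_space_bind'[OF _ Nmeas']) (simp add: space_prob_algebra prob_space_measure_pmf)
    show "ext_bdry T \<in> sets \<nu>" using sets\<nu> Nsets Next by metis
    have "T - ext_bdry T \<in> sets K"
      using Nsets[of True] Next[of True] spK by (metis sets.Diff sets.top)
    then show "emeasure \<nu> (T - ext_bdry T) = 0"
      unfolding \<nu>_def by (subst emeasure_bind[OF sp Nmeas]) (simp_all add: Nnull)
  next
    fix h :: "'a \<Rightarrow> real" assume h: "continuous_on T h \<and> affine_fun_on T h"
    obtain Bh where Bh: "\<forall>z\<in>T. \<bar>h z\<bar> \<le> Bh" using cont_bound[OF cT] h by blast
    have hm: "h \<in> borel_measurable K" unfolding K_def
      using h by (intro borel_measurable_continuous_on_restrict) auto
    have "h (u *\<^sub>R x + (1 - u) *\<^sub>R y) = u * h x + (1 - u) * h y"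
      using h x y u0 u1 by (auto simp: affine_fun_on_def)
    also have "\<dots> = u * (\<integral>z. h z \<partial>rep_meas T x) + (1 - u) * (\<integral>z. h z \<partial>rep_meas T y)"
      using rx ry h by (simp add: rep_measure_def)
    also have "\<dots> = (\<integral>z. h z \<partial>\<nu>)" using intq[OF hm, of Bh] Bh by simp
    finally show "h (u *\<^sub>R x + (1 - u) *\<^sub>R y) = (\<integral>z. h z \<partial>\<nu>)" .
  qed
  have "u *\<^sub>R x + (1 - u) *\<^sub>R y \<in> T" using u0 u1 by (intro convexD[OF cvT x y]) auto
  then have "rep_meas T (u *\<^sub>R x + (1 - u) *\<^sub>R y) = \<nu>" by (rule rep_meas_eq[OF S _ rep])
  then show ?thesis using intq[OF q[folded K_def] qB] by simp
qed

theorem corollary2p15: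
  fixes T :: "'a::real_normed_vector set" and Y Z :: "'a set"
  assumes "metrizable_choquet_simplex T"
    and "ext_bdry T = Y \<union> Z" and "Y \<inter> Z = {}"
    and "Y \<in> sets borel" and "Z \<in> sets borel"
    and "M_set T Y = closure (convex hull Y)"
    and "M_set T Z = closure (convex hull Z)"
  shows "\<exists>f :: 'a \<Rightarrow> real. continuous_on T f \<and> affine_fun_on T f \<and>
           (\<forall>t\<in>T. 0 \<le> f t \<and> f t \<le> 1) \<and>
           (\<forall>t\<in>M_set T Y. f t = 1) \<and> (\<forall>t\<in>M_set T Z. f t = 0)"
proof -
  note S = assms(1)
  have cT: "compact T" and cvT: "convex T" using S by (auto simp: metrizable_choquet_simplex_def)
  have clT: "closed T" using cT by (rule compact_imp_closed)
  show ?thesis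
  proof (cases "M_set T Y = {} \<or> M_set T Z = {}")
    case True
    then show ?thesis
    proof
      assume e: "M_set T Y = {}"
      show ?thesis by (intro exI[of _ "\<lambda>_. 0"]) (auto simp: affine_fun_on_def e)
    next
      assume e: "M_set T Z = {}"
      show ?thesis by (intro exI[of _ "\<lambda>_. 1"]) (auto simp: affine_fun_on_def e)
    qed
  next
    case False
    then have neY: "M_set T Y \<noteq> {}" and neZ: "M_set T Z \<noteq> {}" by auto
    obtain t0 where t0: "t0 \<in> M_set T Y" using neY by auto
    have t0T: "t0 \<in> T" using t0 by (simp add: M_set_def)
    have extsets: "ext_bdry T \<in> sets (restrict_space borel T)"
      using rep_meas_rep[OF S t0T] unfolding rep_measure_def by metis
    have extT: "ext_bdry T \<subseteq> T" by (auto simp: ext_bdry_def extreme_point_of_def)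
    have YT: "Y \<subseteq> T" and ZT: "Z \<subseteq> T" using assms(2) extT by auto
    have YMY: "Y \<subseteq> M_set T Y" unfolding assms(6) by (meson closure_subset hull_subset subset_trans)
    have ZMZ: "Z \<subseteq> M_set T Z" unfolding assms(7) by (meson closure_subset hull_subset subset_trans)
    have MYT: "M_set T Y \<subseteq> T" and MZT: "M_set T Z \<subseteq> T" by (auto simp: M_set_def)
    have clMY: "closed (M_set T Y)" and clMZ: "closed (M_set T Z)" unfolding assms(6,7) by simp_all
    have cvMY: "convex (M_set T Y)" and cvMZ: "convex (M_set T Z)"
      unfolding assms(6,7) by (simp_all add: convex_closure)
    have cMY: "compact (M_set T Y)" using compact_Int_closed[OF cT clMY] MYT by (simp add: Int_absorb1)
    have cMZ: "compact (M_set T Z)" using compact_Int_closed[OF cT clMZ] MZT by (simp add: Int_absorb1)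
    have Ysets: "Y \<in> sets (restrict_space borel T)"
      using assms(4) YT by (auto simp: sets_restrict_space image_iff intro!: bexI[of _ Y])
    have indm: "(indicator Y :: 'a \<Rightarrow> real) \<in> borel_measurable (restrict_space borel T)"
      by (intro measurable_restrict_space1 borel_measurable_indicator assms(4))
    define F where "F t = (\<integral>z. (indicator Y z :: real) \<partial>rep_meas T t)" for t
    have Fmeas: "F t = measure (rep_meas T t) Y" if t: "t \<in> T" for t
    proof -
      have "space (rep_meas T t) = T" using rep_meas_rep[OF S t] by (simp add: rep_measure_def)
      then show ?thesis using YT by (simp add: F_def Int_absorb2)
    qed
    have Fmix: "F (a *\<^sub>R x + (1 - a) *\<^sub>R y) = a * F x + (1 - a) * F y"
      if "x \<in> T" "y \<in> T" "0 \<le> a" "a \<le> 1" for x y a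
      unfolding F_def by (rule mix[OF S that indm, where B=1]) auto
    have F01: "0 \<le> F t \<and> F t \<le> 1" if t: "t \<in> T" for t
    proof -
      interpret prob_space "rep_meas T t" using rep_meas_rep[OF S t] by (simp add: rep_measure_def)
      show ?thesis using Fmeas[OF t] by (simp add: prob_le_1)
    qed
    have F1: "F t = 1" if t: "t \<in> M_set T Y" for t
    proof -
      have tT: "t \<in> T" using t by (simp add: M_set_def)
      have r: "rep_measure T t (rep_meas T t)" by (rule rep_meas_rep[OF S tT])
      interpret prob_space "rep_meas T t" using r by (simp add: rep_measure_def)
      have sets: "sets (rep_meas T t) = sets (restrict_space borel T)" and sp: "space (rep_meas T t) = T"
        using r by (auto simp: rep_measure_def)
      have Tsets: "T \<in> sets (rep_meas T t)" using sets.top[of "rep_meas T t"] sp by simp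
      have extS: "ext_bdry T \<in> sets (rep_meas T t)" using sets extsets by simp
      have n1: "T - ext_bdry T \<in> null_sets (rep_meas T t)"
        using r Tsets extS by (auto simp: rep_measure_def null_sets_def)
      have "ext_bdry T - Y \<in> sets (rep_meas T t)" using sets extsets Ysets by auto
      then have n2: "ext_bdry T - Y \<in> null_sets (rep_meas T t)"
        using t by (auto simp: M_set_def null_sets_def)
      have eq: "T - Y = (T - ext_bdry T) \<union> (ext_bdry T - Y)" using extT assms(2) by auto
      have "emeasure (rep_meas T t) (T - Y) = 0"
        unfolding eq using n1 n2 by (simp add: null_sets.Un null_setsD1)
      then have "prob (space (rep_meas T t) - Y) = 0" using sp by (simp add: measure_def)
      then have "prob Y = 1" using sets Ysets by (subst (asm) prob_compl) auto
      then show ?thesis using Fmeas[OF tT] by simp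
    qed
    have F0: "F t = 0" if t: "t \<in> M_set T Z" for t
    proof -
      have tT: "t \<in> T" using t by (simp add: M_set_def)
      have "ext_bdry T - Z = Y" using assms(2,3) by auto
      then have "emeasure (rep_meas T t) Y = 0" using t by (simp add: M_set_def)
      then show ?thesis using Fmeas[OF tT] by (simp add: measure_def)
    qed
    have Fcomb: "F (a *\<^sub>R y + (1 - a) *\<^sub>R z) = a"
      if "a \<in> {0..1}" "y \<in> M_set T Y" "z \<in> M_set T Z" for a y z
      using that Fmix[of y z a] F1 F0 MYT MZT by auto
    have Feq: "F k = F t" if k: "k \<in> T" and t: "t \<in> T" and eq: "\<forall>g\<in>AF T. g k = g t" for k t
    proof -
      have "rep_measure T k (rep_meas T t)"
        using rep_meas_rep[OF S t] eq unfolding rep_measure_def AF_def by auto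
      then have "rep_meas T k = rep_meas T t" by (rule rep_meas_eq[OF S k])
      then show ?thesis by (simp add: F_def)
    qed
    define KS where "KS C = {a *\<^sub>R y + (1 - a) *\<^sub>R z | a y z. a \<in> C \<and> y \<in> M_set T Y \<and> z \<in> M_set T Z}"
      for C :: "real set"
    have KSimg: "KS C = (\<lambda>p. fst p *\<^sub>R fst (snd p) + (1 - fst p) *\<^sub>R snd (snd p)) ` (C \<times> M_set T Y \<times> M_set T Z)"
      for C unfolding KS_def by force
    have KSE: "\<exists>a y z. k = a *\<^sub>R y + (1 - a) *\<^sub>R z \<and> a \<in> C \<and> y \<in> M_set T Y \<and> z \<in> M_set T Z"
      if "k \<in> KS C" for k C using that by (simp add: KS_def)
    have KScompact: "compact (KS C)" if "compact C" for C
      unfolding KSimg using that cMY cMZ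
      by (intro compact_continuous_image compact_Times continuous_intros)
    have KST: "KS C \<subseteq> T" if "C \<subseteq> {0..1}" for C
      using that MYT MZT unfolding KS_def by (auto intro!: convexD[OF cvT])
    have KSconv: "convex (KS {0..1})" unfolding KS_def by (rule convex_join[OF cvMY cvMZ])
    obtain y0 where y0: "y0 \<in> M_set T Y" using neY by auto
    obtain z0 where z0: "z0 \<in> M_set T Z" using neZ by auto
    have "y0 \<in> KS {0..1}" unfolding KS_def using y0 z0
      by (intro CollectI exI[of _ 1] exI[of _ y0] exI[of _ z0]) auto
    then have KSne: "KS {0..1} \<noteq> {}" by blast
    have extKS: "ext_bdry T \<subseteq> KS {0..1}"
    proof
      fix e assume "e \<in> ext_bdry T"
      then have "e \<in> Y \<or> e \<in> Z" using assms(2) by auto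
      then show "e \<in> KS {0..1}"
      proof
        assume "e \<in> Y"
        then show ?thesis unfolding KS_def using YMY z0
          by (intro CollectI exI[of _ 1] exI[of _ e] exI[of _ z0]) auto
      next
        assume "e \<in> Z"
        then show ?thesis unfolding KS_def using ZMZ y0
          by (intro CollectI exI[of _ 0] exI[of _ y0] exI[of _ e]) auto
      qed
    qed
    have dec: "\<exists>k\<in>KS {0..1}. \<forall>g\<in>AF T. g k = g t" if "t \<in> T" for t
      by (rule approx[OF S KST KScompact KSconv KSne extKS that]) auto
    have pre: "F -` B \<inter> T = {t\<in>T. \<exists>k\<in>KS (B \<inter> {0..1}). \<forall>g\<in>AF T. g t = g k}" for B
    proof (intro set_eqI iffI)
      fix t assume t: "t \<in> F -` B \<inter> T"
      then have tT: "t \<in> T" by blast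
      obtain k where k: "k \<in> KS {0..1}" "\<forall>g\<in>AF T. g k = g t" using dec[OF tT] by blast
      obtain a y z where kk: "k = a *\<^sub>R y + (1 - a) *\<^sub>R z" "a \<in> {0..1}" "y \<in> M_set T Y" "z \<in> M_set T Z"
        using KSE[OF k(1)] by blast
      have kT: "k \<in> T" using KST[of "{0..1}"] k(1) by blast
      have "F k = a" unfolding kk(1) by (rule Fcomb[OF kk(2-4)])
      moreover have "F k = F t" by (rule Feq[OF kT tT k(2)])
      ultimately have aF: "a = F t" by (rule subst)
      from t have "F t \<in> B" by blast
      then have aB: "a \<in> B \<inter> {0..1}" using aF kk(2) by blast
      have kin: "k \<in> KS (B \<inter> {0..1})" unfolding KS_def kk(1)
        using aB kk(3,4) by blast
      have sym2: "\<forall>g\<in>AF T. g t = g k" using k(2) by (metis)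
      show "t \<in> {t\<in>T. \<exists>k\<in>KS (B \<inter> {0..1}). \<forall>g\<in>AF T. g t = g k}"
        using tT kin sym2 by blast
    next
      fix t assume "t \<in> {t\<in>T. \<exists>k\<in>KS (B \<inter> {0..1}). \<forall>g\<in>AF T. g t = g k}"
      then obtain k where t: "t \<in> T" and k: "k \<in> KS (B \<inter> {0..1})" "\<forall>g\<in>AF T. g t = g k" by blast
      obtain a y z where kk: "k = a *\<^sub>R y + (1 - a) *\<^sub>R z" "a \<in> B \<inter> {0..1}" "y \<in> M_set T Y" "z \<in> M_set T Z"
        using KSE[OF k(1)] by blast
      have kT: "k \<in> T" using KST[of "B \<inter> {0..1}"] k(1) by blast
      have "F t = F k" by (rule Feq[OF t kT k(2)])
      also have "\<dots> = a" unfolding kk(1) by (rule Fcomb) (use kk in auto)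
      finally show "t \<in> F -` B \<inter> T" using kk t by simp
    qed
    have cont: "continuous_on T F"
      unfolding continuous_on_closed_vimage[OF clT]
    proof (intro allI impI)
      fix B :: "real set" assume clB: "closed B"
      define K' where "K' = KS (B \<inter> {0..1})"
      have cK: "compact K'" unfolding K'_def using clB by (intro KScompact closed_Int_compact) auto
      have K'T: "K' \<subseteq> T" unfolding K'_def by (rule KST) auto
      show "closed (F -` B \<inter> T)" unfolding pre K'_def[symmetric] closed_sequential_limits
      proof (intro allI impI, elim conjE)
        fix xs l assume xs: "\<forall>n. xs n \<in> {t\<in>T. \<exists>k\<in>K'. \<forall>g\<in>AF T. g t = g k}" and lim: "xs \<longlonglongrightarrow> l"
        have xsT: "\<And>n. xs n \<in> T" using xs by auto
        have lT: "l \<in> T" by (rule closed_sequentially[OF clT xsT lim])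
        have "\<forall>n. \<exists>k. k \<in> K' \<and> (\<forall>g\<in>AF T. g (xs n) = g k)" using xs by (simp add: Bex_def)
        from choice[OF this] obtain ks where ks: "\<forall>n. ks n \<in> K' \<and> (\<forall>g\<in>AF T. g (xs n) = g (ks n))"
          by (elim exE) simp
        have ksK: "\<forall>n. ks n \<in> K'" using ks by simp
        have ksT: "\<And>n. ks n \<in> T" using ksK K'T by (simp add: subset_iff)
        obtain k r where k: "k \<in> K'" "strict_mono r" "(ks \<circ> r) \<longlonglongrightarrow> k"
          by (rule seq_compactE[OF compact_imp_seq_compact[OF cK] ksK])
        have kT: "k \<in> T" using k(1) K'T by (simp add: subset_iff)
        have "\<forall>g\<in>AF T. g l = g k"
        proof
          fix g assume g: "g \<in> AF T"
          have c: "continuous_on T g" using g by (simp add: AF_def)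
          have l1: "(xs \<circ> r) \<longlonglongrightarrow> l" by (rule LIMSEQ_subseq_LIMSEQ[OF lim k(2)])
          have "(\<lambda>n. g ((xs \<circ> r) n)) \<longlonglongrightarrow> g l"
            by (rule continuous_on_tendsto_compose[OF c l1 lT]) (simp add: xsT)
          moreover have "(\<lambda>n. g ((ks \<circ> r) n)) \<longlonglongrightarrow> g k"
            by (rule continuous_on_tendsto_compose[OF c k(3) kT]) (simp add: ksT)
          moreover have "(\<lambda>n. g ((xs \<circ> r) n)) = (\<lambda>n. g ((ks \<circ> r) n))"
          proof
            fix n show "g ((xs \<circ> r) n) = g ((ks \<circ> r) n)" using ks g by simp
          qed
          ultimately show "g l = g k" by (metis LIMSEQ_unique)
        qed
        then show "l \<in> {t\<in>T. \<exists>k\<in>K'. \<forall>g\<in>AF T. g t = g k}" using lT k by blast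
      qed
    qed
    have aff: "affine_fun_on T F" unfolding affine_fun_on_def
      by (intro ballI allI impI Fmix) auto
    have b: "\<forall>t\<in>T. 0 \<le> F t \<and> F t \<le> 1" using F01 by blast
    have one: "\<forall>t\<in>M_set T Y. F t = 1" using F1 by blast
    have zero: "\<forall>t\<in>M_set T Z. F t = 0" using F0 by blast
    show ?thesis by (rule exI[of _ F], intro conjI cont aff b one zero)
  qed
qed

end
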